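(* Let $G$ be a countable discrete amenable group and $(X,d)$ a compact metric space. Let $\sigma$ be the full $G$-shift on $X^G$, $\sigma^h((x_g)_{g\in G})=(x_{gh})_{g\in G}$, and equip $X^G$ with the metric $\boldsymbol d(x,y)=\sum_{g\in G}\alpha_g\,d(x_g,y_g)$, where $\alpha_g\in(0,\infty)$, $\alpha_{1_G}=1$ and $\sum_{g\in G}\alpha_g<\infty$. Assume the $G$-system $(X^G,\sigma)$ with metric $\boldsymbol d$ satisfies Condition (C). Then $$\overline{\mathrm{mdim}}_{\mathrm M}(X^G,G,\boldsymbol d)=\overline{\dim}_{\mathrm B}(X,d),\qquad\underline{\mathrm{mdim}}_{\mathrm M}(X^G,G,\boldsymbol d)=\underline{\dim}_{\mathrm B}(X,d).$$
   Context: Upper/lower Minkowski (box) dimension: $\overline{\dim}_{\mathrm B}(X,d)=\limsup_{\varepsilon\to0}\frac{\log N(\varepsilon)}{|\log\varepsilon|}$, $\underline{\dim}_{\mathrm B}(X,d)=\liminf_{\varepsilon\to0}\frac{\log N(\varepsilon)}{|\log\varepsilon|}$, where $N(\varepsilon)$ is the maximal cardinality of a subset of $X$ whose distinct points are at $d$-distance $>\varepsilon$. Metric mean dimension of a $G$-system $(Z,G)$ with metric $\rho$: with a Følner sequence $(F_n)$, $\rho_F(x,y)=\max_{g\in F}\rho(gx,gy)$ and $s_F(\rho,\varepsilon,Z)$ the maximal cardinality of a subset of $Z$ whose distinct points have $\rho_F$-distance $>\varepsilon$, $\overline{\mathrm{mdim}}_{\mathrm M}(Z,G,\rho)=\limsup_{\varepsilon\to0}\frac{1}{|\log\varepsilon|}\limsup_n\frac1{|F_n|}\log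 s_{F_n}(\rho,\varepsilon,Z)$ and $\underline{\mathrm{mdim}}_{\mathrm M}$ with $\liminf_{\varepsilon\to0}$ (independent of the Følner sequence). Condition (C) for a $G$-system $(Z,G)$ with metric $\rho$: let $E(Z,G)$ be the set of ergodic $G$-invariant Borel probability measures; for a finite measurable partition $\mathcal P$ let $\partial\mathcal P=\bigcup_{A\in\mathcal P}\partial A$, $\mathrm{diam}(\mathcal P)=\max_{A\in\mathcal P}\mathrm{diam}(A)$, $U_r(A)=\{x\in A:\exists y\in Z\setminus A,\ \rho(x,y)<r\}$, $U_r(\mathcal P)=\bigcup_{A\in\mathcal P}U_r(A)$; for $\mu\in E(Z,G)$ and $\gamma>0$ let $r_{\mu,\gamma}=\sup\{r>0:\exists$ finite measurable partition $\mathcal P$ with $\mu(\partial\mathcal P)=0$, $\mathrm{diam}(\mathcal P)<\gamma$, $\mu(U_r(\mathcal P))<\gamma\}$ and $r_\gamma=\inf_{\mu\in E(Z,G)}r_{\mu,\gamma}$. Condition (C) requires $r_\gamma>0$ for every $\gamma>0$ and $\lim_{\gamma\to0}\frac{\log r_\gamma}{\log\gamma}=1$. *)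

theory Defs
  imports "HOL-Probability.Probability"
begin

definition sep_set :: "'a set \<Rightarrow> ('a \<Rightarrow> 'a \<Rightarrow> real) \<Rightarrow> real \<Rightarrow> 'a set \<Rightarrow> bool" where
  "sep_set Z \<rho> \<epsilon> S \<longleftrightarrow> S \<subseteq> Z \<and> finite S \<and> (\<forall>x\<in>S. \<forall>y\<in>S. x \<noteq> y \<longrightarrow> \<rho> x y > \<epsilon>)"

definition max_sep :: "'a set \<Rightarrow> ('a \<Rightarrow> 'a \<Rightarrow> real) \<Rightarrow> real \<Rightarrow> nat" where
  "max_sep Z \<rho> \<epsilon> = Sup (card ` {S. sep_set Z \<rho> \<epsilon> S})"

definition upper_box_dim :: "'a set \<Rightarrow> ('a \<Rightarrow> 'a \<Rightarrow> real) \<Rightarrow> ereal" where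
  "upper_box_dim X d =
     Limsup (at_right 0) (\<lambda>\<epsilon>. ereal (ln (real (max_sep X d \<epsilon>)) / \<bar>ln \<epsilon>\<bar>))"

definition lower_box_dim :: "'a set \<Rightarrow> ('a \<Rightarrow> 'a \<Rightarrow> real) \<Rightarrow> ereal" where
  "lower_box_dim X d =
     Liminf (at_right 0) (\<lambda>\<epsilon>. ereal (ln (real (max_sep X d \<epsilon>)) / \<bar>ln \<epsilon>\<bar>))"

text \<open>The group G is a type of class group_add (not necessarily commutative, written
  additively: g + h is the product gh, 0 is the identity).\<close>

definition folner_seq :: "(nat \<Rightarrow> 'g::group_add set) \<Rightarrow> bool" where
  "folner_seq F \<longleftrightarrow> (\<forall>n. finite (F n) \<and> F n \<noteq> {}) \<and>
     (\<forall>g. (\<lambda>n. real (card (((+) g ` F n - F n) \<union> (F n - (+) g ` F n))) / real (card (F n)))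
            \<longlonglongrightarrow> 0)"

definition amenable :: "'g::group_add itself \<Rightarrow> bool" where
  "amenable _ \<longleftrightarrow> (\<exists>F :: nat \<Rightarrow> 'g set. folner_seq F)"

definition bowen_metric ::
  "('z \<Rightarrow> 'z \<Rightarrow> real) \<Rightarrow> ('g \<Rightarrow> 'z \<Rightarrow> 'z) \<Rightarrow> 'g set \<Rightarrow> 'z \<Rightarrow> 'z \<Rightarrow> real" where
  "bowen_metric \<rho> T F x y = Max ((\<lambda>g. \<rho> (T g x) (T g y)) ` F)"

definition upper_mdim ::
  "'z set \<Rightarrow> ('g \<Rightarrow> 'z \<Rightarrow> 'z) \<Rightarrow> ('z \<Rightarrow> 'z \<Rightarrow> real) \<Rightarrow> (nat \<Rightarrow> 'g set) \<Rightarrow> ereal" where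
  "upper_mdim Z T \<rho> F =
     Limsup (at_right 0) (\<lambda>\<epsilon>.
       limsup (\<lambda>n. ereal (ln (real (max_sep Z (bowen_metric \<rho> T (F n)) \<epsilon>)) / real (card (F n))))
       * ereal (1 / \<bar>ln \<epsilon>\<bar>))"

definition lower_mdim ::
  "'z set \<Rightarrow> ('g \<Rightarrow> 'z \<Rightarrow> 'z) \<Rightarrow> ('z \<Rightarrow> 'z \<Rightarrow> real) \<Rightarrow> (nat \<Rightarrow> 'g set) \<Rightarrow> ereal" where
  "lower_mdim Z T \<rho> F =
     Liminf (at_right 0) (\<lambda>\<epsilon>.
       limsup (\<lambda>n. ereal (ln (real (max_sep Z (bowen_metric \<rho> T (F n)) \<epsilon>)) / real (card (F n))))
       * ereal (1 / \<bar>ln \<epsilon>\<bar>))"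

definition full_shift_space :: "'a set \<Rightarrow> ('g \<Rightarrow> 'a) set" where
  "full_shift_space X = {x. \<forall>g. x g \<in> X}"

definition shift :: "'g::group_add \<Rightarrow> ('g \<Rightarrow> 'a) \<Rightarrow> ('g \<Rightarrow> 'a)" where
  "shift h x = (\<lambda>g. x (g + h))"

definition shift_metric :: "('g \<Rightarrow> real) \<Rightarrow> ('a \<Rightarrow> 'a \<Rightarrow> real) \<Rightarrow> ('g \<Rightarrow> 'a) \<Rightarrow> ('g \<Rightarrow> 'a) \<Rightarrow> real" where
  "shift_metric \<alpha> d x y = (\<Sum>\<^sub>\<infinity>g. \<alpha> g * d (x g) (y g))"

definition borel_sets_of :: "'a topology \<Rightarrow> 'a set set" where
  "borel_sets_of T = sets (sigma (topspace T) {S. openin T S})"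

definition invariant_prob_measure ::
  "'z set \<Rightarrow> ('g \<Rightarrow> 'z \<Rightarrow> 'z) \<Rightarrow> ('z \<Rightarrow> 'z \<Rightarrow> real) \<Rightarrow> 'z measure \<Rightarrow> bool" where
  "invariant_prob_measure Z T \<rho> \<mu> \<longleftrightarrow>
     prob_space \<mu> \<and> space \<mu> = Z \<and> sets \<mu> = borel_sets_of (Metric_space.mtopology Z \<rho>) \<and>
     (\<forall>h. T h \<in> \<mu> \<rightarrow>\<^sub>M \<mu> \<and> distr \<mu> \<mu> (T h) = \<mu>)"

definition ergodic_measure ::
  "'z set \<Rightarrow> ('g \<Rightarrow> 'z \<Rightarrow> 'z) \<Rightarrow> ('z \<Rightarrow> 'z \<Rightarrow> real) \<Rightarrow> 'z measure \<Rightarrow> bool" where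
  "ergodic_measure Z T \<rho> \<mu> \<longleftrightarrow> invariant_prob_measure Z T \<rho> \<mu> \<and>
     (\<forall>A \<in> sets \<mu>. (\<forall>h. T h -` A \<inter> Z = A) \<longrightarrow> measure \<mu> A = 0 \<or> measure \<mu> A = 1)"

definition fin_meas_partition :: "'z measure \<Rightarrow> 'z set \<Rightarrow> 'z set set \<Rightarrow> bool" where
  "fin_meas_partition \<mu> Z P \<longleftrightarrow>
     finite P \<and> P \<subseteq> sets \<mu> \<and> {} \<notin> P \<and> \<Union>P = Z \<and> disjoint P"

definition set_diam :: "('z \<Rightarrow> 'z \<Rightarrow> real) \<Rightarrow> 'z set \<Rightarrow> real" where
  "set_diam \<rho> A = Sup {\<rho> x y | x y. x \<in> A \<and> y \<in> A}"

definition inner_nbhd :: "'z set \<Rightarrow> ('z \<Rightarrow> 'z \<Rightarrow> real) \<Rightarrow> real \<Rightarrow> 'z set \<Rightarrow> 'z set" where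
  "inner_nbhd Z \<rho> r A = {x \<in> A. \<exists>y \<in> Z - A. \<rho> x y < r}"

definition r_mu ::
  "'z set \<Rightarrow> ('z \<Rightarrow> 'z \<Rightarrow> real) \<Rightarrow> 'z measure \<Rightarrow> real \<Rightarrow> ereal" where
  "r_mu Z \<rho> \<mu> \<gamma> = Sup {ereal r | r. r > 0 \<and> (\<exists>P. fin_meas_partition \<mu> Z P \<and>
      measure \<mu> (\<Union>A\<in>P. Metric_space.mtopology Z \<rho> frontier_of A) = 0 \<and>
      (\<forall>A\<in>P. set_diam \<rho> A < \<gamma>) \<and>
      measure \<mu> (\<Union>A\<in>P. inner_nbhd Z \<rho> r A) < \<gamma>)}"

definition r_gamma ::
  "'z set \<Rightarrow> ('g \<Rightarrow> 'z \<Rightarrow> 'z) \<Rightarrow> ('z \<Rightarrow> 'z \<Rightarrow> real) \<Rightarrow> real \<Rightarrow> ereal" where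
  "r_gamma Z T \<rho> \<gamma> = Inf {r_mu Z \<rho> \<mu> \<gamma> | \<mu>. ergodic_measure Z T \<rho> \<mu>}"

definition condition_C :: "'z set \<Rightarrow> ('g \<Rightarrow> 'z \<Rightarrow> 'z) \<Rightarrow> ('z \<Rightarrow> 'z \<Rightarrow> real) \<Rightarrow> bool" where
  "condition_C Z T \<rho> \<longleftrightarrow> (\<forall>\<gamma>>0. r_gamma Z T \<rho> \<gamma> > 0) \<and>
     ((\<lambda>\<gamma>. ln (real_of_ereal (r_gamma Z T \<rho> \<gamma>)) / ln \<gamma>) \<longlongrightarrow> 1) (at_right 0)"

end

theory Submission
  imports Defs
begin


lemma max_sep_facts:
  assumes B: "\<And>S. sep_set Z \<rho> e S \<Longrightarrow> card S \<le> B"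
  shows "\<And>S. sep_set Z \<rho> e S \<Longrightarrow> card S \<le> max_sep Z \<rho> e"
    and "\<exists>S. sep_set Z \<rho> e S \<and> card S = max_sep Z \<rho> e"
proof -
  let ?C = "card ` {S. sep_set Z \<rho> e S}"
  have fin: "finite ?C" unfolding finite_nat_set_iff_bounded_le using B by blast
  have ne: "?C \<noteq> {}" using sep_set_def[of Z \<rho> e "{}"] by auto
  have eq: "max_sep Z \<rho> e = Max ?C" unfolding max_sep_def using cSup_eq_Max[OF fin ne] by simp
  show "\<And>S. sep_set Z \<rho> e S \<Longrightarrow> card S \<le> max_sep Z \<rho> e"
    unfolding eq using fin by (intro Max_ge) auto
  show "\<exists>S. sep_set Z \<rho> e S \<and> card S = max_sep Z \<rho> e"
    using Max_in[OF fin ne] unfolding eq by auto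
qed

lemma sep_bounded:
  assumes M: "Metric_space X d" and comp: "compact_space (Metric_space.mtopology X d)" and e: "e > 0"
  shows "\<exists>B. \<forall>S. sep_set X d e S \<longrightarrow> card S \<le> B"
proof -
  interpret Metric_space X d by (rule M)
  have "mtotally_bounded X" using comp compact_space_eq_mcomplete_mtotally_bounded by blast
  then obtain K where K: "finite K" "K \<subseteq> X" "X \<subseteq> (\<Union>x\<in>K. mball x (e/2))"
    unfolding mtotally_bounded_def using e by (meson half_gt_zero)
  have "card S \<le> card K" if S: "sep_set X d e S" for S
  proof -
    define f where "f s = (SOME k. k \<in> K \<and> s \<in> mball k (e/2))" for s
    have f: "f s \<in> K \<and> s \<in> mball (f s) (e/2)" if "s \<in> S" for s
    proof -
      have "s \<in> X" using S that unfolding sep_set_def by auto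
      then have "\<exists>k. k \<in> K \<and> s \<in> mball k (e/2)" using K by blast
      then show ?thesis unfolding f_def by (rule someI_ex)
    qed
    have "inj_on f S"
    proof (rule inj_onI, rule ccontr)
      fix s t assume st: "s \<in> S" "t \<in> S" "f s = f t" "s \<noteq> t"
      have "d s t > e" using S st unfolding sep_set_def by auto
      moreover have "d s t \<le> d s (f s) + d (f s) t"
        using f[OF st(1)] f[OF st(2)] st by (intro triangle) auto
      moreover have "d s (f s) < e/2" "d (f s) t < e/2"
        using f[OF st(1)] f[OF st(2)] st(3) by (auto simp: commute)
      ultimately show False by linarith
    qed
    then show ?thesis using f K(1) by (intro card_inj_on_le) auto
  qed
  then show ?thesis by blast
qed

lemma net_exists:
  assumes M: "Metric_space X d" and comp: "compact_space (Metric_space.mtopology X d)" and e: "e > 0"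
  shows "\<exists>T. sep_set X d e T \<and> card T = max_sep X d e \<and> (\<forall>x\<in>X. \<exists>t\<in>T. d x t \<le> e)"
proof -
  interpret Metric_space X d by (rule M)
  obtain B where B: "\<And>S. sep_set X d e S \<Longrightarrow> card S \<le> B" using sep_bounded[OF M comp e] by blast
  obtain T where T: "sep_set X d e T" "card T = max_sep X d e" using max_sep_facts(2)[OF B] by blast
  have "\<exists>t\<in>T. d x t \<le> e" if x: "x \<in> X" for x
  proof (rule ccontr)
    assume "\<not> ?thesis"
    then have far: "\<forall>t\<in>T. d x t > e" by auto
    have xT: "x \<notin> T" using far x e by fastforce
    have "sep_set X d e (insert x T)" using T(1) far x unfolding sep_set_def by (auto simp: commute)
    then have "card (insert x T) \<le> max_sep X d e" using max_sep_facts(1)[OF B] by blast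
    moreover have "finite T" using T(1) sep_set_def by auto
    ultimately show False using xT T(2) by simp
  qed
  then show ?thesis using T by blast
qed

lemma max_sep_ge1:
  assumes "x \<in> Z" and "\<And>S. sep_set Z \<rho> e S \<Longrightarrow> card S \<le> B"
  shows "max_sep Z \<rho> e \<ge> 1"
proof -
  have "sep_set Z \<rho> e {x}" using assms unfolding sep_set_def by auto
  from max_sep_facts(1)[OF assms(2) this] show ?thesis by simp
qed

lemma dist_bounded:
  assumes M: "Metric_space X d" and comp: "compact_space (Metric_space.mtopology X d)"
  shows "\<exists>D\<ge>0. \<forall>x\<in>X. \<forall>y\<in>X. d x y \<le> D"
proof -
  interpret Metric_space X d by (rule M)
  have "mtotally_bounded X" using comp compact_space_eq_mcomplete_mtotally_bounded by blast
  then have "mbounded X" by (rule mtotally_bounded_imp_mbounded)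
  then obtain z B where zB: "X \<subseteq> mcball z B" unfolding mbounded_def by blast
  have dB: "d x y \<le> 2*B" if "x \<in> X" "y \<in> X" for x y
  proof -
    have "z \<in> X" "d z x \<le> B" "d z y \<le> B" using zB that by auto
    moreover have "d x y \<le> d x z + d z y" using that \<open>z \<in> X\<close> by (intro triangle) auto
    ultimately show ?thesis by (simp add: commute)
  qed
  show ?thesis
  proof (cases "X = {}")
    case False
    then obtain x where "x \<in> X" by auto
    then have "0 \<le> 2*B" using dB[of x x] nonneg[of x x] by linarith
    then show ?thesis using dB by blast
  qed auto
qed




locale shsys =
  fixes X :: "'a set" and d :: "'a \<Rightarrow> 'a \<Rightarrow> real" and \<alpha> :: "'g::group_add \<Rightarrow> real"
  assumes metr: "Metric_space X d"
    and comp: "compact_space (Metric_space.mtopology X d)"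
    and ne: "X \<noteq> {}"
    and alpha_pos: "\<And>g. \<alpha> g > 0"
    and alpha_one: "\<alpha> 0 = 1"
    and alpha_sum: "\<alpha> summable_on UNIV"
begin

interpretation Metric_space X d by (rule metr)

definition "Dd = (SOME D. D \<ge> 0 \<and> (\<forall>x\<in>X. \<forall>y\<in>X. d x y \<le> D))"

lemma Dd: "Dd \<ge> 0" "\<And>x y. x \<in> X \<Longrightarrow> y \<in> X \<Longrightarrow> d x y \<le> Dd"
  using someI_ex[OF dist_bounded[OF metr comp]] unfolding Dd_def by auto

abbreviation "Z \<equiv> full_shift_space X"
abbreviation "\<rho> \<equiv> shift_metric \<alpha> d"
definition "A = infsum \<alpha> UNIV"

lemma inZ: "x \<in> Z \<Longrightarrow> x g \<in> X" unfolding full_shift_space_def by auto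

lemma shift_Z: "x \<in> Z \<Longrightarrow> shift h x \<in> Z" unfolding full_shift_space_def shift_def by auto

lemma alpha_summ: "\<alpha> summable_on B"
  using alpha_sum by (rule summable_on_subset) auto

lemma summ: assumes "x \<in> Z" "y \<in> Z" shows "(\<lambda>g. \<alpha> g * d (x g) (y g)) summable_on B"
proof (rule summable_on_comparison_test)
  show "(\<lambda>g. \<alpha> g * Dd) summable_on B" using alpha_summ by (rule summable_on_cmult_left)
  show "\<alpha> g * d (x g) (y g) \<le> \<alpha> g * Dd" for g
    using Dd(2)[OF inZ[OF assms(1)] inZ[OF assms(2)]] alpha_pos[of g] by (intro mult_left_mono) auto
  show "0 \<le> \<alpha> g * d (x g) (y g)" for g using alpha_pos[of g] by simp
qed

lemma sum_le_A: "finite K \<Longrightarrow> sum \<alpha> K \<le> A"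
  unfolding A_def using infsum_mono_neutral[of \<alpha> K \<alpha> UNIV] alpha_summ alpha_pos
  by (simp add: less_imp_le)

lemma A_ge1: "A \<ge> 1" using sum_le_A[of "{0}"] alpha_one by simp

lemma rho_ge: assumes "x \<in> Z" "y \<in> Z" shows "d (x 0) (y 0) \<le> \<rho> x y"
proof -
  have "infsum (\<lambda>g. \<alpha> g * d (x g) (y g)) {0} \<le> infsum (\<lambda>g. \<alpha> g * d (x g) (y g)) UNIV"
    using summ[OF assms] alpha_pos by (intro infsum_mono_neutral) (auto simp: less_imp_le)
  then show ?thesis unfolding shift_metric_def using alpha_one by simp
qed

lemma rho_le: assumes "e > 0"
  shows "\<exists>K. finite K \<and> (\<forall>x\<in>Z. \<forall>y\<in>Z. \<rho> x y \<le> (\<Sum>g\<in>K. \<alpha> g * d (x g) (y g)) + e/2)"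
proof -
  have hs: "(\<alpha> has_sum A) UNIV" unfolding A_def using alpha_sum by simp
  have epos: "e/(2*(Dd+1)) > 0" using assms Dd(1) by simp
  obtain K where K: "finite K" "dist (sum \<alpha> K) A \<le> e / (2*(Dd+1))"
    using has_sum_finite_approximation[OF hs epos] by blast
  have tail: "infsum \<alpha> (-K) = A - sum \<alpha> K"
    using infsum_Un_disjoint[of \<alpha> K "-K"] alpha_summ K(1) unfolding A_def
    by (simp add: Un_commute)
  have "A - sum \<alpha> K \<le> e / (2*(Dd+1))" using K(2) sum_le_A[OF K(1)] by (simp add: dist_real_def)
  then have tl: "Dd * (A - sum \<alpha> K) \<le> e/2"
  proof -
    assume h: "A - sum \<alpha> K \<le> e / (2*(Dd+1))"
    have "Dd * (A - sum \<alpha> K) \<le> Dd * (e / (2*(Dd+1)))"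
      using h Dd(1) by (intro mult_left_mono) auto
    also have "\<dots> \<le> (Dd+1) * (e / (2*(Dd+1)))"
      using Dd(1) assms by (intro mult_right_mono) auto
    also have "\<dots> = e/2" using Dd(1) by (simp add: field_simps)
    finally show ?thesis .
  qed
  have "\<rho> x y \<le> (\<Sum>g\<in>K. \<alpha> g * d (x g) (y g)) + e/2" if xy: "x \<in> Z" "y \<in> Z" for x y
  proof -
    let ?f = "\<lambda>g. \<alpha> g * d (x g) (y g)"
    have "\<rho> x y = infsum ?f K + infsum ?f (-K)"
      unfolding shift_metric_def using infsum_Un_disjoint[of ?f K "-K"] summ[OF xy]
      by (simp add: Un_commute)
    also have "infsum ?f K = (\<Sum>g\<in>K. ?f g)" using K(1) by simp
    also have "infsum ?f (-K) \<le> infsum (\<lambda>g. \<alpha> g * Dd) (-K)"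
      using summ[OF xy] alpha_summ
      by (intro infsum_mono summable_on_cmult_left mult_left_mono Dd(2) inZ xy)
         (auto intro: less_imp_le alpha_pos)
    also have "\<dots> = Dd * (A - sum \<alpha> K)" using infsum_cmult_left[of Dd \<alpha> "-K"] alpha_summ tail
      by simp
    finally show ?thesis using tl by linarith
  qed
  then show ?thesis using K(1) by blast
qed

end



context shsys begin

interpretation Metric_space X d by (rule metr)

definition "KF K F = (\<lambda>(k,h). k + h) ` (K \<times> F)"

lemma bowen_le:
  assumes "finite F" "F \<noteq> {}" "\<And>h. h \<in> F \<Longrightarrow> \<rho> (shift h x) (shift h y) \<le> e"
  shows "bowen_metric \<rho> shift F x y \<le> e"
  unfolding bowen_metric_def using assms by (subst Max_le_iff) auto

lemma bowen_ge:
  assumes "finite F" "h \<in> F"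
  shows "\<rho> (shift h x) (shift h y) \<le> bowen_metric \<rho> shift F x y"
  unfolding bowen_metric_def using assms by (intro Max_ge) auto

lemma upper_count:
  assumes e: "e > 0" and K: "finite K"
    and Kb: "\<forall>x\<in>Z. \<forall>y\<in>Z. \<rho> x y \<le> (\<Sum>g\<in>K. \<alpha> g * d (x g) (y g)) + e/2"
    and F: "finite F" "F \<noteq> {}"
    and S: "sep_set Z (bowen_metric \<rho> shift F) e S"
  shows "card S \<le> max_sep X d (e/(4*A)) ^ card (KF K F)"
proof -
  define \<delta> where "\<delta> = e/(4*A)"
  have dpos: "\<delta> > 0" unfolding \<delta>_def using e A_ge1 by simp
  obtain T where T: "sep_set X d \<delta> T" "card T = max_sep X d \<delta>" "\<forall>x\<in>X. \<exists>t\<in>T. d x t \<le> \<delta>"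
    using net_exists[OF metr comp dpos] by blast
  define sel where "sel x g = (SOME t. t \<in> T \<and> d (x g) t \<le> \<delta>)" for x :: "'g \<Rightarrow> 'a" and g
  have sel: "sel x g \<in> T \<and> d (x g) (sel x g) \<le> \<delta>" if "x \<in> Z" for x g
  proof -
    have "\<exists>t. t \<in> T \<and> d (x g) t \<le> \<delta>" using T(3) inZ[OF that] by blast
    then show ?thesis unfolding sel_def by (rule someI_ex)
  qed
  have TX: "T \<subseteq> X" "finite T" using T(1) unfolding sep_set_def by auto
  define \<phi> where "\<phi> x = restrict (sel x) (KF K F)" for x
  have SZ: "S \<subseteq> Z" "finite S" using S unfolding sep_set_def by auto
  have "inj_on \<phi> S"
  proof (rule inj_onI, rule ccontr)
    fix x y assume xy: "x \<in> S" "y \<in> S" "\<phi> x = \<phi> y" "x \<noteq> y"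
    have xZ: "x \<in> Z" and yZ: "y \<in> Z" using xy SZ by auto
    have "bowen_metric \<rho> shift F x y \<le> e"
    proof (rule bowen_le[OF F])
      fix h assume h: "h \<in> F"
      have dk: "d (x (k+h)) (y (k+h)) \<le> 2*\<delta>" if k: "k \<in> K" for k
      proof -
        have "k + h \<in> KF K F" unfolding KF_def using k h by auto
        moreover have "\<phi> x (k+h) = \<phi> y (k+h)" using xy(3) by simp
        ultimately have eq: "sel x (k+h) = sel y (k+h)" unfolding \<phi>_def by simp
        have "d (x (k+h)) (y (k+h)) \<le> d (x (k+h)) (sel x (k+h)) + d (sel x (k+h)) (y (k+h))"
          using inZ[OF xZ] inZ[OF yZ] sel[OF xZ] TX by (intro triangle) auto
        also have "\<dots> \<le> \<delta> + \<delta>" using sel[OF xZ, of "k+h"] sel[OF yZ, of "k+h"] eq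
          by (simp add: commute)
        finally show ?thesis by simp
      qed
      have "\<rho> (shift h x) (shift h y) \<le> (\<Sum>g\<in>K. \<alpha> g * d (shift h x g) (shift h y g)) + e/2"
        using Kb shift_Z[OF xZ] shift_Z[OF yZ] by blast
      also have "(\<Sum>g\<in>K. \<alpha> g * d (shift h x g) (shift h y g)) \<le> (\<Sum>g\<in>K. \<alpha> g * (2*\<delta>))"
        using dk alpha_pos unfolding shift_def by (intro sum_mono mult_left_mono) (auto intro: less_imp_le)
      also have "\<dots> = sum \<alpha> K * (2*\<delta>)" by (simp add: sum_distrib_right)
      also have "\<dots> \<le> A * (2*\<delta>)" using sum_le_A[OF K] dpos by (intro mult_right_mono) auto
      also have "A * (2*\<delta>) = e/2" unfolding \<delta>_def using A_ge1 by (simp add: field_simps)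
      finally show "\<rho> (shift h x) (shift h y) \<le> e" by simp
    qed
    moreover have "bowen_metric \<rho> shift F x y > e" using S xy unfolding sep_set_def by auto
    ultimately show False by simp
  qed
  moreover have "\<phi> ` S \<subseteq> PiE (KF K F) (\<lambda>_. T)"
  proof
    fix z assume "z \<in> \<phi> ` S"
    then obtain x where x: "x \<in> S" "z = \<phi> x" by blast
    then have "x \<in> Z" using SZ by blast
    then show "z \<in> PiE (KF K F) (\<lambda>_. T)" unfolding x(2) \<phi>_def using sel by simp
  qed
  moreover have "finite (KF K F)" unfolding KF_def using K F by auto
  ultimately have "card S \<le> card (PiE (KF K F) (\<lambda>_. T))"
    using TX by (intro card_inj_on_le) (simp_all add: finite_PiE)
  also have "\<dots> = card T ^ card (KF K F)" using \<open>finite (KF K F)\<close> by (simp add: card_PiE)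
  finally show ?thesis using T(2) \<delta>_def by simp
qed

lemma lower_count:
  assumes e: "e > 0" and F: "finite F" "F \<noteq> {}"
  shows "\<exists>E. sep_set Z (bowen_metric \<rho> shift F) e E \<and> card E = max_sep X d e ^ card F"
proof -
  obtain B where B: "\<And>S. sep_set X d e S \<Longrightarrow> card S \<le> B" using sep_bounded[OF metr comp e] by blast
  obtain S where S: "sep_set X d e S" "card S = max_sep X d e" using max_sep_facts(2)[OF B] by blast
  have SX: "S \<subseteq> X" "finite S" using S(1) unfolding sep_set_def by auto
  obtain x0 where x0: "x0 \<in> X" using ne by blast
  define \<psi> where "\<psi> f = (\<lambda>g. if g \<in> F then f g else x0)" for f :: "'g \<Rightarrow> 'a"
  define E where "E = \<psi> ` PiE F (\<lambda>_. S)"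
  have inj: "inj_on \<psi> (PiE F (\<lambda>_. S))"
  proof (rule inj_onI)
    fix f f' assume ff: "f \<in> PiE F (\<lambda>_. S)" "f' \<in> PiE F (\<lambda>_. S)" "\<psi> f = \<psi> f'"
    show "f = f'"
    proof (rule PiE_ext[OF ff(1) ff(2)])
      fix g assume "g \<in> F"
      then show "f g = f' g" using fun_cong[OF ff(3), of g] unfolding \<psi>_def by simp
    qed
  qed
  have cardE: "card E = card S ^ card F"
    unfolding E_def using card_image[OF inj] F SX by (simp add: card_PiE)
  have EZ: "E \<subseteq> Z"
  proof
    fix u assume "u \<in> E"
    then obtain f where f: "f \<in> PiE F (\<lambda>_. S)" "u = \<psi> f" unfolding E_def by blast
    have "u g \<in> X" for g
    proof (cases "g \<in> F")
      case True
      then have "f g \<in> S" using f(1) by blast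
      then show ?thesis using SX(1) True unfolding f(2) \<psi>_def by auto
    qed (use x0 in \<open>simp add: f(2) \<psi>_def\<close>)
    then show "u \<in> Z" unfolding full_shift_space_def by simp
  qed
  have finE: "finite E" unfolding E_def using F SX by (auto intro: finite_PiE)
  have "bowen_metric \<rho> shift F u v > e" if uv: "u \<in> E" "v \<in> E" "u \<noteq> v" for u v
  proof -
    obtain f f' where f: "f \<in> PiE F (\<lambda>_. S)" "f' \<in> PiE F (\<lambda>_. S)" "u = \<psi> f" "v = \<psi> f'"
      using uv(1,2) unfolding E_def by blast
    obtain g where g: "u g \<noteq> v g" using uv(3) by blast
    then have gF: "g \<in> F" using f unfolding \<psi>_def by auto
    have "u g \<in> S" "v g \<in> S" using f gF unfolding \<psi>_def by auto
    then have "d (u g) (v g) > e" using S g unfolding sep_set_def by auto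
    also have "d (u g) (v g) = d (shift g u 0) (shift g v 0)" unfolding shift_def by simp
    also have "\<dots> \<le> \<rho> (shift g u) (shift g v)"
      using uv EZ by (intro rho_ge shift_Z) auto
    also have "\<dots> \<le> bowen_metric \<rho> shift F u v" using bowen_ge[OF F(1) gF] .
    finally show ?thesis .
  qed
  then have "sep_set Z (bowen_metric \<rho> shift F) e E" unfolding sep_set_def using EZ finE by auto
  then show ?thesis using cardE S(2) by auto
qed

end



lemma folner_KF:
  fixes F :: "nat \<Rightarrow> 'g::group_add set"
  assumes fol: "folner_seq F" and K: "finite K"
  shows "\<exists>r. (r \<longlonglongrightarrow> 1) \<and> (\<forall>n. real (card ((\<lambda>(k,h). k + h) ` (K \<times> F n))) / real (card (F n)) \<le> r n)"
proof -
  define e where "e k n = real (card ((+) k ` F n - F n)) / real (card (F n))" for k n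
  define r where "r n = 1 + (\<Sum>k\<in>K. e k n)" for n
  have Fn: "finite (F n)" "F n \<noteq> {}" for n using fol unfolding folner_seq_def by auto
  have e0: "(e k) \<longlonglongrightarrow> 0" for k
  proof (rule tendsto_sandwich[of "\<lambda>_. 0" _ _ "\<lambda>n. real (card (((+) k ` F n - F n) \<union> (F n - (+) k ` F n))) / real (card (F n))"])
    show "\<forall>\<^sub>F n in sequentially. 0 \<le> e k n" unfolding e_def by simp
    show "\<forall>\<^sub>F n in sequentially. e k n \<le> real (card (((+) k ` F n - F n) \<union> (F n - (+) k ` F n))) / real (card (F n))"
      unfolding e_def using Fn by (intro always_eventually allI divide_right_mono) (auto intro!: card_mono)
    show "((\<lambda>n. real (card (((+) k ` F n - F n) \<union> (F n - (+) k ` F n))) / real (card (F n))) \<longlonglongrightarrow> 0)"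
      using fol unfolding folner_seq_def by blast
  qed simp
  have "r \<longlonglongrightarrow> 1 + (\<Sum>k\<in>K. 0)" unfolding r_def by (intro tendsto_intros e0)
  then have "r \<longlonglongrightarrow> 1" by simp
  moreover have "real (card ((\<lambda>(k,h). k + h) ` (K \<times> F n))) / real (card (F n)) \<le> r n" for n
  proof -
    have sub: "(\<lambda>(k,h). k + h) ` (K \<times> F n) \<subseteq> F n \<union> (\<Union>k\<in>K. (+) k ` F n - F n)" by auto
    have "card ((\<lambda>(k,h). k + h) ` (K \<times> F n)) \<le> card (F n \<union> (\<Union>k\<in>K. (+) k ` F n - F n))"
      using sub Fn K by (intro card_mono) auto
    also have "\<dots> \<le> card (F n) + card (\<Union>k\<in>K. (+) k ` F n - F n)" by (rule card_Un_le)
    also have "\<dots> \<le> card (F n) + (\<Sum>k\<in>K. card ((+) k ` F n - F n))" using card_UN_le[OF K, of "\<lambda>k. (+) k ` F n - F n"] by (rule add_left_mono)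
    finally have "real (card ((\<lambda>(k,h). k + h) ` (K \<times> F n))) \<le> real (card (F n) + (\<Sum>k\<in>K. card ((+) k ` F n - F n)))"
      by (simp only: of_nat_le_iff)
    then have "real (card ((\<lambda>(k,h). k + h) ` (K \<times> F n))) \<le> real (card (F n)) + (\<Sum>k\<in>K. real (card ((+) k ` F n - F n)))"
      by simp
    moreover have "real (card (F n)) > 0" using Fn by (simp add: card_gt_0_iff)
    ultimately show ?thesis unfolding r_def e_def
      by (simp add: field_simps sum_divide_distrib[symmetric])
  qed
  ultimately show ?thesis by blast
qed

context shsys begin

abbreviation "NN e \<equiv> max_sep X d e"
abbreviation "PP F e \<equiv> max_sep Z (bowen_metric \<rho> shift F) e"

lemma Z_ne: "\<exists>x. x \<in> Z"
proof -
  obtain x0 where "x0 \<in> X" using ne by blast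
  then have "(\<lambda>_. x0) \<in> Z" unfolding full_shift_space_def by simp
  then show ?thesis by blast
qed

lemma NN_ge1: "e > 0 \<Longrightarrow> NN e \<ge> 1"
  using sep_bounded[OF metr comp, of e] ne max_sep_ge1 by (metis ex_in_conv)

lemma Z_bound:
  assumes e: "e > 0" and F: "finite F" "F \<noteq> {}"
  shows "\<exists>B. \<forall>S. sep_set Z (bowen_metric \<rho> shift F) e S \<longrightarrow> card S \<le> B"
  using rho_le[OF e] upper_count[OF e _ _ F] by blast

lemma PP_ge1: "e > 0 \<Longrightarrow> finite F \<Longrightarrow> F \<noteq> {} \<Longrightarrow> PP F e \<ge> 1"
  using Z_bound Z_ne max_sep_ge1 by metis

lemma upper_eps:
  assumes fol: "folner_seq F" and e: "e > 0"
  shows "limsup (\<lambda>n. ereal (ln (real (PP (F n) e)) / real (card (F n)))) \<le> ereal (ln (real (NN (e/(4*A)))))"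
proof -
  have Fn: "finite (F n)" "F n \<noteq> {}" for n using fol unfolding folner_seq_def by auto
  obtain K where K: "finite K" "\<forall>x\<in>Z. \<forall>y\<in>Z. \<rho> x y \<le> (\<Sum>g\<in>K. \<alpha> g * d (x g) (y g)) + e/2"
    using rho_le[OF e] by blast
  obtain r where r: "r \<longlonglongrightarrow> 1" "\<And>n. real (card (KF K (F n))) / real (card (F n)) \<le> r n"
    using folner_KF[OF fol K(1)] unfolding KF_def by blast
  define L where "L = ln (real (NN (e/(4*A))))"
  have dpos: "e/(4*A) > 0" using e A_ge1 by simp
  have L0: "L \<ge> 0" unfolding L_def using NN_ge1[OF dpos] by simp
  have le: "ln (real (PP (F n) e)) / real (card (F n)) \<le> r n * L" for n
  proof -
    obtain S where S: "sep_set Z (bowen_metric \<rho> shift (F n)) e S" "card S = PP (F n) e"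
      using max_sep_facts(2) Z_bound[OF e Fn[of n]] by metis
    have "PP (F n) e \<le> NN (e/(4*A)) ^ card (KF K (F n))"
      using upper_count[OF e K Fn S(1)] S(2) by simp
    then have le1: "real (PP (F n) e) \<le> real (NN (e/(4*A))) ^ card (KF K (F n))"
      by (metis of_nat_le_iff of_nat_power)
    have p1: "real (PP (F n) e) > 0" using PP_ge1[OF e Fn(1)[of n] Fn(2)[of n]] by simp
    have p2: "real (NN (e/(4*A))) ^ card (KF K (F n)) > 0" using less_le_trans[OF p1 le1] .
    have "ln (real (PP (F n) e)) \<le> ln (real (NN (e/(4*A))) ^ card (KF K (F n)))"
      using ln_le_cancel_iff[OF p1 p2] le1 by blast
    also have "\<dots> = real (card (KF K (F n))) * L"
      unfolding L_def using NN_ge1[OF dpos] by (simp add: ln_realpow)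
    finally have "ln (real (PP (F n) e)) / real (card (F n)) \<le> real (card (KF K (F n))) * L / real (card (F n))"
      by (intro divide_right_mono) auto
    also have "\<dots> = (real (card (KF K (F n))) / real (card (F n))) * L" by simp
    also have "\<dots> \<le> r n * L" using r(2)[of n] L0 by (intro mult_right_mono) auto
    finally show ?thesis .
  qed
  have "limsup (\<lambda>n. ereal (ln (real (PP (F n) e)) / real (card (F n)))) \<le> limsup (\<lambda>n. ereal (r n * L))"
    using le by (intro Limsup_mono always_eventually) auto
  also have "limsup (\<lambda>n. ereal (r n * L)) = ereal (1 * L)"
  proof (intro lim_imp_Limsup)
    have "(\<lambda>n. r n * L) \<longlonglongrightarrow> 1 * L" using r(1) by (intro tendsto_mult tendsto_const)
    then show "(\<lambda>n. ereal (r n * L)) \<longlonglongrightarrow> ereal (1 * L)" by (rule tendsto_ereal)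
  qed simp
  finally show ?thesis unfolding L_def by simp
qed

lemma lower_eps:
  assumes fol: "folner_seq F" and e: "e > 0"
  shows "ereal (ln (real (NN e))) \<le> limsup (\<lambda>n. ereal (ln (real (PP (F n) e)) / real (card (F n))))"
proof -
  have Fn: "finite (F n)" "F n \<noteq> {}" for n using fol unfolding folner_seq_def by auto
  have le: "ln (real (NN e)) \<le> ln (real (PP (F n) e)) / real (card (F n))" for n
  proof -
    obtain E where E: "sep_set Z (bowen_metric \<rho> shift (F n)) e E" "card E = NN e ^ card (F n)"
      using lower_count[OF e Fn] by blast
    obtain B where "\<forall>S. sep_set Z (bowen_metric \<rho> shift (F n)) e S \<longrightarrow> card S \<le> B"
      using Z_bound[OF e Fn] by blast
    then have "card E \<le> PP (F n) e" using max_sep_facts(1) E(1) by metis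
    then have le1: "real (NN e) ^ card (F n) \<le> real (PP (F n) e)" using E(2)
      by (metis of_nat_le_iff of_nat_power)
    have "real (NN e) > 0" using NN_ge1[OF e] by simp
    then have p1: "real (NN e) ^ card (F n) > 0" by simp
    have p2: "real (PP (F n) e) > 0" using less_le_trans[OF p1 le1] .
    have "ln (real (NN e) ^ card (F n)) \<le> ln (real (PP (F n) e))"
      using ln_le_cancel_iff[OF p1 p2] le1 by blast
    then have "real (card (F n)) * ln (real (NN e)) \<le> ln (real (PP (F n) e))"
      using \<open>real (NN e) > 0\<close> by (simp add: ln_realpow)
    moreover have "real (card (F n)) > 0" using Fn by (simp add: card_gt_0_iff)
    ultimately show ?thesis by (simp add: field_simps)
  qed
  have "limsup (\<lambda>n. ereal (ln (real (NN e)))) \<le> limsup (\<lambda>n. ereal (ln (real (PP (F n) e)) / real (card (F n))))"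
    using le by (intro Limsup_mono always_eventually) auto
  then show ?thesis by (simp add: Limsup_const)
qed

end



lemma ereal_eps_mult:
  assumes "\<And>\<delta>::real. \<delta> > 0 \<Longrightarrow> a \<le> b * ereal (1+\<delta>)" and "0 \<le> b"
  shows "a \<le> b"
proof (cases b)
  case (real r)
  show ?thesis
  proof (cases a)
    case (real s)
    have "s \<le> r * (1 + \<delta>)" if "\<delta> > 0" for \<delta> using assms(1)[OF that] \<open>a = ereal s\<close> \<open>b = ereal r\<close> by simp
    then have "s \<le> r"
    proof -
      assume h: "\<And>\<delta>. \<delta> > 0 \<Longrightarrow> s \<le> r * (1 + \<delta>)"
      show "s \<le> r"
      proof (rule ccontr)
        assume "\<not> s \<le> r"
        then have sr: "s > r" by simp
        have r0: "r \<ge> 0" using assms(2) \<open>b = ereal r\<close> by simp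
        define \<delta> where "\<delta> = (s - r) / (2 * (r + 1))"
        have dp: "\<delta> > 0" unfolding \<delta>_def using sr r0 by simp
        have "r * \<delta> < s - r"
        proof -
          have "r * \<delta> = (s - r) * (r / (2*(r+1)))" unfolding \<delta>_def by (simp add: field_simps)
          also have "\<dots> < (s - r) * 1" using sr r0 by (intro mult_strict_left_mono) (auto simp: field_simps)
          finally show ?thesis by simp
        qed
        then show False using h[OF dp] by (simp add: field_simps)
      qed
    qed
    then show ?thesis using \<open>a = ereal s\<close> \<open>b = ereal r\<close> by simp
  next
    case PInf
    then show ?thesis using assms(1)[of 1] \<open>b = ereal r\<close> by simp
  qed simp
qed (use assms in auto)

context shsys begin

definition "cc = 1/(4*A)"

lemma cc: "cc > 0" "cc < 1" unfolding cc_def using A_ge1 by auto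

definition "uu e = ln (real (NN e)) / \<bar>ln e\<bar>"
definition "kk e = \<bar>ln (cc*e)\<bar> / \<bar>ln e\<bar>"

lemma uu_nonneg: "e > 0 \<Longrightarrow> uu e \<ge> 0" unfolding uu_def using NN_ge1[of e] by simp

lemma kk_ev: assumes "\<delta> > 0" shows "eventually (\<lambda>e. kk e \<le> 1 + \<delta>) (at_right 0)"
  unfolding eventually_at_right_field
proof (intro exI[of _ "min 1 (exp (ln cc / \<delta>))"] conjI allI impI)
  show "0 < min 1 (exp (ln cc / \<delta>))" by simp
  fix e :: real assume e: "0 < e" "e < min 1 (exp (ln cc / \<delta>))"
  have l1: "ln e < 0" using e by simp
  have "ln e < ln cc / \<delta>" using e by (metis exp_ln min_less_iff_conj exp_less_cancel_iff)
  then have l2: "- ln cc \<le> \<delta> * (- ln e)" using assms by (simp add: field_simps)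
  have lc: "ln cc < 0" using cc by simp
  have lm: "ln (cc*e) = ln cc + ln e" using cc e by (simp add: ln_mult)
  have "kk e = (- ln cc - ln e) / (- ln e)" unfolding kk_def lm using l1 lc
    by (simp add: abs_of_neg)
  also have "\<dots> = 1 + (- ln cc) / (- ln e)" using l1 by (simp add: field_simps)
  also have "(- ln cc) / (- ln e) \<le> \<delta>" using l1 l2 by (simp add: field_simps)
  finally show "kk e \<le> 1 + \<delta>" by simp
qed

context fixes F :: "nat \<Rightarrow> 'g set" assumes fol: "folner_seq F" begin

definition "mm e = limsup (\<lambda>n. ereal (ln (real (PP (F n) e)) / real (card (F n)))) * ereal (1 / \<bar>ln e\<bar>)"

lemma low: "e > 0 \<Longrightarrow> ereal (uu e) \<le> mm e"
  unfolding mm_def uu_def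
  using ereal_mult_right_mono[OF lower_eps[OF fol], of e "ereal (1 / \<bar>ln e\<bar>)"]
  by (simp add: divide_inverse)

lemma upp: "e > 0 \<Longrightarrow> e < 1 \<Longrightarrow> mm e \<le> ereal (uu (cc*e) * kk e)"
proof -
  assume e: "e > 0" "e < 1"
  have "mm e \<le> ereal (ln (real (NN (e/(4*A))))) * ereal (1 / \<bar>ln e\<bar>)"
    unfolding mm_def by (intro ereal_mult_right_mono upper_eps[OF fol e(1)]) simp
  also have "e/(4*A) = cc*e" unfolding cc_def by simp
  also have "ereal (ln (real (NN (cc*e)))) * ereal (1 / \<bar>ln e\<bar>) = ereal (uu (cc*e) * kk e)"
  proof -
    have "cc * e < 1 * 1" using cc e by (intro mult_strict_mono) auto
    then have "ln (cc*e) \<noteq> 0" using cc e by simp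
    then show ?thesis unfolding uu_def kk_def by simp
  qed
  finally show ?thesis .
qed

lemma reparam_sup: "Limsup (at_right 0) (\<lambda>e. g (cc*e)) = Limsup (at_right (0::real)) g"
proof -
  have "inj ((*) cc)" using cc by (auto intro: injI)
  from Limsup_filtermap_eq[OF this, of "at_right 0" g] filtermap_times_pos_at_right[OF cc(1), of 0]
  show ?thesis by simp
qed

lemma reparam_inf: "Liminf (at_right 0) (\<lambda>e. g (cc*e)) = Liminf (at_right (0::real)) g"
proof -
  have "inj ((*) cc)" using cc by (auto intro: injI)
  from Liminf_filtermap_eq[OF this, of "at_right 0" g] filtermap_times_pos_at_right[OF cc(1), of 0]
  show ?thesis by simp
qed

lemma ev01: "eventually (\<lambda>e. 0 < e \<and> e < (1::real)) (at_right 0)"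
  unfolding eventually_at_right_field by (intro exI[of _ 1]) auto

lemma upp2: assumes "\<delta> > 0"
  shows "eventually (\<lambda>e. mm e \<le> ereal (uu (cc*e)) * ereal (1+\<delta>)) (at_right 0)"
  using ev01 kk_ev[OF assms]
proof eventually_elim
  case (elim e)
  then have "mm e \<le> ereal (uu (cc*e) * kk e)" using upp by auto
  also have "uu (cc*e) * kk e \<le> uu (cc*e) * (1+\<delta>)"
    using elim uu_nonneg[of "cc*e"] cc by (intro mult_left_mono) auto
  finally show ?case by simp
qed

lemma upper_eq: "Limsup (at_right 0) mm = Limsup (at_right 0) (\<lambda>e. ereal (uu e))"
proof (rule antisym)
  show "Limsup (at_right 0) (\<lambda>e. ereal (uu e)) \<le> Limsup (at_right 0) mm"
    using ev01 by (intro Limsup_mono) (auto elim: eventually_mono intro: low)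
  show "Limsup (at_right 0) mm \<le> Limsup (at_right 0) (\<lambda>e. ereal (uu e))"
  proof (rule ereal_eps_mult)
    fix \<delta> :: real assume d: "\<delta> > 0"
    have "Limsup (at_right 0) mm \<le> Limsup (at_right 0) (\<lambda>e. ereal (uu (cc*e)) * ereal (1+\<delta>))"
      by (intro Limsup_mono upp2 d)
    also have "\<dots> = Limsup (at_right 0) (\<lambda>e. ereal (uu (cc*e))) * ereal (1+\<delta>)"
      using d by (intro Limsup_ereal_mult_right) auto
    also have "\<dots> = Limsup (at_right 0) (\<lambda>e. ereal (uu e)) * ereal (1+\<delta>)"
      using reparam_sup[of "\<lambda>e. ereal (uu e)"] by simp
    finally show "Limsup (at_right 0) mm \<le> Limsup (at_right 0) (\<lambda>e. ereal (uu e)) * ereal (1+\<delta>)" .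
  next
    show "0 \<le> Limsup (at_right 0) (\<lambda>e. ereal (uu e))"
      using ev01 by (intro le_Limsup) (auto elim: eventually_mono intro: uu_nonneg)
  qed
qed

lemma lower_eq: "Liminf (at_right 0) mm = Liminf (at_right 0) (\<lambda>e. ereal (uu e))"
proof (rule antisym)
  show "Liminf (at_right 0) (\<lambda>e. ereal (uu e)) \<le> Liminf (at_right 0) mm"
    using ev01 by (intro Liminf_mono) (auto elim: eventually_mono intro: low)
  show "Liminf (at_right 0) mm \<le> Liminf (at_right 0) (\<lambda>e. ereal (uu e))"
  proof (rule ereal_eps_mult)
    fix \<delta> :: real assume d: "\<delta> > 0"
    have "Liminf (at_right 0) mm \<le> Liminf (at_right 0) (\<lambda>e. ereal (uu (cc*e)) * ereal (1+\<delta>))"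
      by (intro Liminf_mono upp2 d)
    also have "\<dots> = Liminf (at_right 0) (\<lambda>e. ereal (uu (cc*e))) * ereal (1+\<delta>)"
      using d by (intro Liminf_ereal_mult_right) auto
    also have "\<dots> = Liminf (at_right 0) (\<lambda>e. ereal (uu e)) * ereal (1+\<delta>)"
      using reparam_inf[of "\<lambda>e. ereal (uu e)"] by simp
    finally show "Liminf (at_right 0) mm \<le> Liminf (at_right 0) (\<lambda>e. ereal (uu e)) * ereal (1+\<delta>)" .
  next
    show "0 \<le> Liminf (at_right 0) (\<lambda>e. ereal (uu e))"
      using ev01 by (intro Liminf_bounded) (auto elim: eventually_mono intro: uu_nonneg)
  qed
qed

lemma final:
  "upper_mdim Z shift \<rho> F = upper_box_dim X d \<and> lower_mdim Z shift \<rho> F = lower_box_dim X d"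
  using upper_eq lower_eq unfolding upper_mdim_def lower_mdim_def upper_box_dim_def lower_box_dim_def
    mm_def uu_def by simp

end
end

theorem mainTheorem6:
  fixes X :: "'a set" and d :: "'a \<Rightarrow> 'a \<Rightarrow> real"
    and \<alpha> :: "'g::{group_add, countable} \<Rightarrow> real"
    and F :: "nat \<Rightarrow> 'g set"
  assumes amen: "amenable TYPE('g)"
    and metr: "Metric_space X d"
    and comp: "compact_space (Metric_space.mtopology X d)"
    and ne: "X \<noteq> {}"
    and alpha_pos: "\<And>g. \<alpha> g > 0"
    and alpha_one: "\<alpha> 0 = 1"
    and alpha_sum: "\<alpha> summable_on UNIV"
    and C: "condition_C (full_shift_space X) shift (shift_metric \<alpha> d)"
    and folner: "folner_seq F"
  shows "upper_mdim (full_shift_space X) shift (shift_metric \<alpha> d) F = upper_box_dim X d \<and>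
         lower_mdim (full_shift_space X) shift (shift_metric \<alpha> d) F = lower_box_dim X d"
  proof -
  interpret shsys X d \<alpha> by (rule shsys.intro) (fact metr comp ne alpha_pos alpha_one alpha_sum)+
  show ?thesis using final[OF folner] .
qed

end
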